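(* For any integer $x\in\mathbb{N}\setminus\{1\}$, the filter $\mathcal{F}_{\{1,x\}}$ is the greatest element (with respect to inclusion) of the set $\{\mathcal{F}_{\{1,x^n\}}:n\in\mathbb{N}\}$. If moreover $x\notin\{2m:m\in\mathbb{N}\}\cup\{2^m-1:m\in\mathbb{N}\}$, then $\{n\in\mathbb{N}:\mathcal{F}_{\{1,x^n\}}=\mathcal{F}_{\{1,x\}}\}=\{1\}$.
   Context: $\mathbb{N}=\{1,2,\dots\}$, $\mathbb{N}_0=\{0\}\cup\mathbb{N}$. The Kirch topology $\tau_K$ on $\mathbb{N}$ is generated by the base of all $a+b\mathbb{N}_0=\{a+bn:n\in\mathbb{N}_0\}$ with $a,b\in\mathbb{N}$ coprime and $b$ square-free. Closures $\overline{U}$ are in $\tau_K$; $\tau_y=\{U\in\tau_K:y\in U\}$. For finite $E\subseteq\mathbb{N}$, $\mathcal{F}_E=\{B\subseteq\mathbb{N}:\exists (U_y)_{y\in E}\in\prod_{y\in E}\tau_y\ (\bigcap_{y\in E}\overline{U_y}\subseteq B)\}$. *)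

theory Defs
  imports "HOL-Analysis.Analysis" "HOL-Computational_Algebra.Squarefree"
begin

text \<open>Positive integers are modelled as the subset {1..} of nat.
  The arithmetic progression a + b N_0.\<close>
definition arith_prog :: "nat \<Rightarrow> nat \<Rightarrow> nat set" where
  "arith_prog a b = {a + b * n | n. True}"

definition kirch_base :: "nat set set" where
  "kirch_base = {arith_prog a b | a b. a \<ge> 1 \<and> b \<ge> 1 \<and> coprime a b \<and> squarefree b}"

definition kirch_top :: "nat topology" where
  "kirch_top = topology (\<lambda>U. U \<subseteq> {1..} \<and>
      (\<forall>x\<in>U. \<exists>B\<in>kirch_base. x \<in> B \<and> B \<subseteq> U))"

definition kirch_nbhds :: "nat \<Rightarrow> nat set set" where
  "kirch_nbhds y = {U. openin kirch_top U \<and> y \<in> U}"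

definition kirch_filter :: "nat set \<Rightarrow> nat set set" where
  "kirch_filter E = {B. B \<subseteq> {1..} \<and>
      (\<exists>U. (\<forall>y\<in>E. U y \<in> kirch_nbhds y) \<and>
           (\<Inter>y\<in>E. kirch_top closure_of (U y)) \<subseteq> B)}"

end

theory Submission
  imports Defs "HOL-Number_Theory.Number_Theory"
begin

lemma squarefree_lcm_nat:
  fixes a b :: nat
  assumes "squarefree a" "squarefree b"
  shows "squarefree (lcm a b)"
proof -
  have a0: "a \<noteq> 0" and b0: "b \<noteq> 0" using assms not_squarefree_0 by metis+
  have "0 < a" "0 < b" using a0 b0 by auto
  have l0: "lcm a b \<noteq> 0" using a0 b0 by (simp add: lcm_eq_0_iff)
  show ?thesis
    using assms a0 b0 l0
    by (simp add: squarefree_factorial_semiring'' multiplicity_lcm \<open>0 < a\<close> \<open>0 < b\<close>)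
qed

lemma arith_prog_mem: "z \<in> arith_prog a b \<longleftrightarrow> (\<exists>n. z = a + b * n)"
  by (auto simp: arith_prog_def)

lemma arith_prog_sub:
  assumes "z \<in> arith_prog a b" "b dvd L"
  shows "arith_prog z L \<subseteq> arith_prog a b"
proof
  fix w assume "w \<in> arith_prog z L"
  then obtain n where w: "w = z + L * n" by (auto simp: arith_prog_mem)
  obtain n0 where z: "z = a + b * n0" using assms(1) by (auto simp: arith_prog_mem)
  obtain k where L: "L = b * k" using assms(2) by auto
  have "w = a + b * (n0 + k * n)" using w z L by (simp add: algebra_simps)
  thus "w \<in> arith_prog a b" by (auto simp: arith_prog_mem)
qed

lemma arith_prog_self: "a \<in> arith_prog a b"
  by (auto simp: arith_prog_mem intro: exI[of _ 0])

lemma arith_prog_coprime: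
  assumes "z \<in> arith_prog a b" "coprime a b"
  shows "coprime z b"
proof -
  obtain n0 where z: "z = a + b * n0" using assms(1) by (auto simp: arith_prog_mem)
  have "gcd b a = 1" using assms(2) coprime_iff_gcd_eq_1 gcd.commute by metis
  hence g: "gcd b (n0 * b + a) = 1" using gcd_add_mult[of b n0 a] by simp
  have "z = n0 * b + a" using z by simp
  then show ?thesis using g by (metis coprime_iff_gcd_eq_1 gcd.commute)
qed

lemma kirch_baseI: "a \<ge> 1 \<Longrightarrow> b \<ge> 1 \<Longrightarrow> coprime a b \<Longrightarrow> squarefree b
   \<Longrightarrow> arith_prog a b \<in> kirch_base"
  unfolding kirch_base_def by blast

lemma arith_prog_pos: "a \<ge> 1 \<Longrightarrow> arith_prog a b \<subseteq> {1..}"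
  by (auto simp: arith_prog_mem)

lemma istop_kirch: "istopology (\<lambda>U. U \<subseteq> {1..} \<and>
      (\<forall>x\<in>U. \<exists>B\<in>kirch_base. x \<in> B \<and> B \<subseteq> U))"
  unfolding istopology_def
proof (rule conjI; intro allI impI)
  fix S T :: "nat set"
  assume S: "S \<subseteq> {1..} \<and> (\<forall>x\<in>S. \<exists>B\<in>kirch_base. x \<in> B \<and> B \<subseteq> S)"
     and T: "T \<subseteq> {1..} \<and> (\<forall>x\<in>T. \<exists>B\<in>kirch_base. x \<in> B \<and> B \<subseteq> T)"
  show "S \<inter> T \<subseteq> {1..} \<and> (\<forall>x\<in>S \<inter> T. \<exists>B\<in>kirch_base. x \<in> B \<and> B \<subseteq> S \<inter> T)"
  proof (intro conjI ballI)
    show "S \<inter> T \<subseteq> {1..}" using S by auto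
  next
    fix x assume x: "x \<in> S \<inter> T"
    obtain B1 where B1: "B1 \<in> kirch_base" "x \<in> B1" "B1 \<subseteq> S" using S x by blast
    obtain B2 where B2: "B2 \<in> kirch_base" "x \<in> B2" "B2 \<subseteq> T" using T x by blast
    obtain a1 b1 where ab1: "B1 = arith_prog a1 b1" "a1 \<ge> 1" "b1 \<ge> 1" "coprime a1 b1" "squarefree b1"
      using B1(1) unfolding kirch_base_def by blast
    obtain a2 b2 where ab2: "B2 = arith_prog a2 b2" "a2 \<ge> 1" "b2 \<ge> 1" "coprime a2 b2" "squarefree b2"
      using B2(1) unfolding kirch_base_def by blast
    have x1: "x \<ge> 1" using x S by auto
    have c1: "coprime x b1" using arith_prog_coprime B1(2) ab1 by auto
    have c2: "coprime x b2" using arith_prog_coprime B2(2) ab2 by auto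
    have "coprime x (b1 * b2)" using c1 c2 by simp
    moreover have "lcm b1 b2 dvd b1 * b2" by (simp add: lcm_least)
    ultimately have "coprime x (lcm b1 b2)"
      using coprime_divisors[of x x "lcm b1 b2" "b1 * b2"] by simp
    moreover have "squarefree (lcm b1 b2)" using squarefree_lcm_nat ab1 ab2 by auto
    moreover have "lcm b1 b2 \<ge> 1" using ab1 ab2 by (simp add: Suc_le_eq lcm_pos_nat)
    ultimately have "arith_prog x (lcm b1 b2) \<in> kirch_base" using x1
      by (simp add: kirch_baseI)
    moreover have "arith_prog x (lcm b1 b2) \<subseteq> B1"
      using arith_prog_sub[of x a1 b1 "lcm b1 b2"] B1(2) ab1(1) by simp
    moreover have "arith_prog x (lcm b1 b2) \<subseteq> B2"
      using arith_prog_sub[of x a2 b2 "lcm b1 b2"] B2(2) ab2(1) by simp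
    ultimately have "arith_prog x (lcm b1 b2) \<in> kirch_base \<and> arith_prog x (lcm b1 b2) \<subseteq> S \<inter> T"
      using B1(3) B2(3) by blast
    then show "\<exists>B\<in>kirch_base. x \<in> B \<and> B \<subseteq> S \<inter> T"
      using arith_prog_self[of x "lcm b1 b2"] by blast
  qed
next
  fix K :: "nat set set"
  assume K: "\<forall>U\<in>K. U \<subseteq> {1..} \<and> (\<forall>x\<in>U. \<exists>B\<in>kirch_base. x \<in> B \<and> B \<subseteq> U)"
  show "\<Union>K \<subseteq> {1..} \<and> (\<forall>x\<in>\<Union>K. \<exists>B\<in>kirch_base. x \<in> B \<and> B \<subseteq> \<Union>K)"
  proof (intro conjI ballI)
    show "\<Union>K \<subseteq> {1..}" using K by blast
    fix x assume "x \<in> \<Union>K"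
    then obtain U where U: "U \<in> K" "x \<in> U" by blast
    then obtain B where "B\<in>kirch_base" "x \<in> B" "B \<subseteq> U" using K by blast
    then show "\<exists>B\<in>kirch_base. x \<in> B \<and> B \<subseteq> \<Union>K" using U by blast
  qed
qed

lemma openin_kirch: "openin kirch_top U \<longleftrightarrow> U \<subseteq> {1..} \<and>
      (\<forall>x\<in>U. \<exists>B\<in>kirch_base. x \<in> B \<and> B \<subseteq> U)"
  unfolding kirch_top_def using istop_kirch by simp

lemma openin_ap:
  assumes "a \<ge> 1" "b \<ge> 1" "coprime a b" "squarefree b"
  shows "openin kirch_top (arith_prog a b)"
  unfolding openin_kirch
proof (intro conjI ballI)
  show "arith_prog a b \<subseteq> {1..}" using arith_prog_pos assms by auto
  fix x assume "x \<in> arith_prog a b"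
  moreover have "arith_prog a b \<in> kirch_base" using assms by (simp add: kirch_baseI)
  ultimately show "\<exists>B\<in>kirch_base. x \<in> B \<and> B \<subseteq> arith_prog a b" by blast
qed

lemma topspace_kirch: "topspace kirch_top \<subseteq> {1..}"
  using openin_kirch openin_topspace by blast


lemma crt_ex:
  fixes y c e d :: nat
  assumes "d \<ge> 1" "e \<ge> 1" "int (gcd e d) dvd int y - int c"
  shows "\<exists>i j. y + e * i = c + d * j"
proof -
  define G where "G = int (gcd e d)"
  obtain k where k: "int y - int c = G * k" using assms(3) G_def by blast
  obtain u v where uv: "u * int e + v * int d = gcd (int e) (int d)" using bezout_int by blast
  have uv': "u * int e = G - v * int d" using uv G_def by simp
  define N where "N = \<bar>k * u\<bar> + \<bar>k * v\<bar>"
  define I where "I = - (k * u) + int d * N"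
  define J where "J = k * v + int e * N"
  have N0: "N \<ge> 0" unfolding N_def by simp
  have "N \<le> int d * N" using assms(1) N0 by (simp add: mult_le_cancel_right1)
  moreover have "k * u \<le> N" unfolding N_def by (simp add: abs_ge_self add_increasing2)
  ultimately have I0: "I \<ge> 0" unfolding I_def by linarith
  have "N \<le> int e * N" using assms(2) N0 by (simp add: mult_le_cancel_right1)
  moreover have "- (k * v) \<le> N" unfolding N_def by (simp add: abs_ge_minus_self add_increasing)
  ultimately have J0: "J \<ge> 0" unfolding J_def by linarith
  have "int y + int e * I = int y - k * (u * int e) + int e * int d * N"
    unfolding I_def by (simp add: algebra_simps)
  also have "\<dots> = int y - k * (G - v * int d) + int e * int d * N" using uv' by simp
  also have "\<dots> = (int y - G * k) + int d * (k * v + int e * N)" by (simp add: algebra_simps)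
  also have "\<dots> = int c + int d * J" using k J_def by simp
  finally have eq: "int y + int e * I = int c + int d * J" .
  have "int (y + e * nat I) = int (c + d * nat J)" using eq I0 J0 by simp
  hence "y + e * nat I = c + d * nat J" using of_nat_eq_iff by blast
  thus ?thesis by blast
qed

lemma squarefree_dvd_all_primes:
  fixes g m :: nat
  assumes "squarefree g" "\<And>p. prime p \<Longrightarrow> p dvd g \<Longrightarrow> p dvd m"
  shows "g dvd m"
proof (cases "m = 0")
  case True thus ?thesis by simp
next
  case False
  have g0: "g \<noteq> 0" using assms(1) by (metis not_squarefree_0)
  show ?thesis
  proof (rule multiplicity_le_imp_dvd[OF g0])
    fix p :: nat assume p: "prime p"
    show "multiplicity p g \<le> multiplicity p m"
    proof (cases "p dvd g")
      case True
      have "multiplicity p g \<le> 1" using assms(1) p squarefree_factorial_semiring''[OF g0] by simp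
      moreover have "p dvd m" using assms(2) p True by blast
      hence "0 < multiplicity p m" using prime_multiplicity_gt_zero_iff[of p m] p False by simp
      ultimately show ?thesis by linarith
    next
      case False
      hence "multiplicity p g = 0" by (simp add: not_dvd_imp_multiplicity_0)
      thus ?thesis by simp
    qed
  qed
qed

lemma topspace_kirch_eq: "topspace kirch_top = {1..}"
proof
  show "topspace kirch_top \<subseteq> {1..}" by (rule topspace_kirch)
  show "{1..} \<subseteq> topspace kirch_top"
  proof
    fix y :: nat assume "y \<in> {1..}"
    hence "openin kirch_top (arith_prog y 1)" using openin_ap[of y 1] by simp
    hence "arith_prog y 1 \<subseteq> topspace kirch_top" by (rule openin_subset)
    thus "y \<in> topspace kirch_top" using arith_prog_self by blast
  qed
qed

lemma nbhd_base:
  assumes "openin kirch_top W" "w \<in> W"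
  shows "\<exists>d\<ge>1. coprime w d \<and> squarefree d \<and> arith_prog w d \<subseteq> W"
proof -
  obtain B where B: "B \<in> kirch_base" "w \<in> B" "B \<subseteq> W" using assms openin_kirch by blast
  obtain a b where ab: "B = arith_prog a b" "a \<ge> 1" "b \<ge> 1" "coprime a b" "squarefree b"
    using B(1) unfolding kirch_base_def by blast
  have "coprime w b" using arith_prog_coprime B(2) ab by auto
  moreover have "arith_prog w b \<subseteq> W" using arith_prog_sub[of w a b b] B ab by auto
  ultimately show ?thesis using ab by blast
qed

lemma cl_ap:
  fixes c d y :: nat
  assumes "c \<ge> 1" "d \<ge> 1" "coprime c d" "y \<ge> 1"
  shows "y \<in> kirch_top closure_of arith_prog c d \<longleftrightarrow>
         (\<forall>q. prime q \<longrightarrow> q dvd d \<longrightarrow> q dvd y \<or> [y = c] (mod q))"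
proof
  assume y: "y \<in> kirch_top closure_of arith_prog c d"
  show "\<forall>q. prime q \<longrightarrow> q dvd d \<longrightarrow> q dvd y \<or> [y = c] (mod q)"
  proof (intro allI impI)
    fix q :: nat assume q: "prime q" "q dvd d"
    show "q dvd y \<or> [y = c] (mod q)"
    proof (cases "q dvd y")
      case True thus ?thesis by simp
    next
      case False
      have "coprime y q" using prime_imp_coprime[OF q(1) False] by (simp add: coprime_commute)
      moreover have "q \<ge> 1" using q prime_ge_1_nat by blast
      moreover have "squarefree q" using q squarefree_prime by blast
      ultimately have "openin kirch_top (arith_prog y q)" using openin_ap assms(4) by blast
      then obtain z where z: "z \<in> arith_prog c d" "z \<in> arith_prog y q"
        using y arith_prog_self[of y q] unfolding in_closure_of by blast
      obtain j where zj: "z = c + d * j" using z(1) arith_prog_mem by blast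
      obtain i where zi: "z = y + q * i" using z(2) arith_prog_mem by blast
      obtain r where dr: "d = q * r" using q(2) by blast
      have "z mod q = c mod q" using zj dr by (simp add: mult.assoc)
      moreover have "z mod q = y mod q" using zi by simp
      ultimately show ?thesis by (simp add: cong_def)
    qed
  qed
next
  assume H: "\<forall>q. prime q \<longrightarrow> q dvd d \<longrightarrow> q dvd y \<or> [y = c] (mod q)"
  have ytop: "y \<in> topspace kirch_top" using topspace_kirch_eq assms(4) by simp
  show "y \<in> kirch_top closure_of arith_prog c d"
    unfolding in_closure_of
  proof (intro conjI allI impI ytop)
    fix T assume T: "y \<in> T \<and> openin kirch_top T"
    then obtain e where e: "e \<ge> 1" "coprime y e" "squarefree e" "arith_prog y e \<subseteq> T"
      using nbhd_base by blast
    have sq: "squarefree (gcd e d)" using e(3) squarefree_mono by (metis gcd_dvd1)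
    have "[y = c] (mod gcd e d)"
    proof -
      have "gcd e d dvd nat \<bar>int y - int c\<bar>"
      proof (rule squarefree_dvd_all_primes[OF sq])
        fix p :: nat assume p: "prime p" "p dvd gcd e d"
        hence pe: "p dvd e" and pd: "p dvd d" by auto
        have "\<not> p dvd y"
        proof
          assume "p dvd y"
          hence "p dvd gcd y e" using pe by simp
          hence "p dvd 1" using e(2) by simp
          thus False using p(1) by simp
        qed
        hence "[y = c] (mod p)" using H p(1) pd by blast
        thus "p dvd nat \<bar>int y - int c\<bar>" using cong_altdef_nat' by blast
      qed
      thus ?thesis using cong_altdef_nat' by blast
    qed
    hence "int (gcd e d) dvd int y - int c"
      by (simp add: cong_int_iff[symmetric] cong_iff_dvd_diff)
    then obtain i j where ij: "y + e * i = c + d * j" using crt_ex assms(2) e(1) by blast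
    have "y + e * i \<in> arith_prog y e" by (auto simp: arith_prog_mem)
    hence "y + e * i \<in> T" using e(4) by blast
    moreover have "y + e * i \<in> arith_prog c d" using ij by (auto simp: arith_prog_mem)
    ultimately show "\<exists>z. z \<in> arith_prog c d \<and> z \<in> T" by blast
  qed
qed


lemma F2_iff:
  assumes "z \<noteq> 1"
  shows "B \<in> kirch_filter {1, z} \<longleftrightarrow> B \<subseteq> {1..} \<and>
    (\<exists>V W. openin kirch_top V \<and> 1 \<in> V \<and> openin kirch_top W \<and> z \<in> W \<and>
       kirch_top closure_of V \<inter> kirch_top closure_of W \<subseteq> B)"
proof
  assume "B \<in> kirch_filter {1, z}"
  then obtain U where B: "B \<subseteq> {1..}" "\<forall>y\<in>{1,z}. U y \<in> kirch_nbhds y"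
    "(\<Inter>y\<in>{1,z}. kirch_top closure_of (U y)) \<subseteq> B"
    unfolding kirch_filter_def by blast
  have "openin kirch_top (U 1) \<and> 1 \<in> U 1 \<and> openin kirch_top (U z) \<and> z \<in> U z"
    using B(2) unfolding kirch_nbhds_def by blast
  moreover have "kirch_top closure_of (U 1) \<inter> kirch_top closure_of (U z) \<subseteq> B"
    using B(3) by simp
  ultimately show "B \<subseteq> {1..} \<and>
    (\<exists>V W. openin kirch_top V \<and> 1 \<in> V \<and> openin kirch_top W \<and> z \<in> W \<and>
       kirch_top closure_of V \<inter> kirch_top closure_of W \<subseteq> B)" using B(1) by blast
next
  assume "B \<subseteq> {1..} \<and>
    (\<exists>V W. openin kirch_top V \<and> 1 \<in> V \<and> openin kirch_top W \<and> z \<in> W \<and>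
       kirch_top closure_of V \<inter> kirch_top closure_of W \<subseteq> B)"
  then obtain V W where VW: "B \<subseteq> {1..}" "openin kirch_top V" "1 \<in> V" "openin kirch_top W" "z \<in> W"
     "kirch_top closure_of V \<inter> kirch_top closure_of W \<subseteq> B" by blast
  define U where "U = (\<lambda>t::nat. if t = 1 then V else W)"
  have "\<forall>y\<in>{1,z}. U y \<in> kirch_nbhds y"
    using VW assms unfolding U_def kirch_nbhds_def by auto
  moreover have "(\<Inter>y\<in>{1,z}. kirch_top closure_of (U y)) \<subseteq> B"
    using VW(6) assms unfolding U_def by simp
  ultimately show "B \<in> kirch_filter {1, z}" using VW(1) unfolding kirch_filter_def by blast
qed

lemma cl_pos: "y \<in> kirch_top closure_of S \<Longrightarrow> y \<ge> 1"
  using closure_of_subset_topspace topspace_kirch by fastforce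

lemma sub_filter:
  fixes x n :: nat
  assumes "x \<ge> 2" "n \<ge> 1"
  shows "kirch_filter {1, x ^ n} \<subseteq> kirch_filter {1, x}"
proof
  fix B assume "B \<in> kirch_filter {1, x ^ n}"
  have "x ^ 1 \<le> x ^ n" using assms by (intro power_increasing) auto
  hence xn1: "x ^ n \<noteq> 1" using assms by simp
  have x1: "x \<noteq> 1" using assms by simp
  obtain V W where VW: "B \<subseteq> {1..}" "openin kirch_top V" "1 \<in> V" "openin kirch_top W" "x ^ n \<in> W"
     "kirch_top closure_of V \<inter> kirch_top closure_of W \<subseteq> B"
    using F2_iff[OF xn1, THEN iffD1, OF \<open>B \<in> kirch_filter {1, x ^ n}\<close>] by blast
  obtain d where d: "d \<ge> 1" "coprime (x ^ n) d" "squarefree d" "arith_prog (x ^ n) d \<subseteq> W"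
    using nbhd_base[OF VW(4,5)] by blast
  have cxd: "coprime x d" using d(2) assms(2) by simp
  have op1: "openin kirch_top (arith_prog 1 d)" using openin_ap d by simp
  have opx: "openin kirch_top (arith_prog x d)" using openin_ap d cxd assms by simp
  define V' where "V' = V \<inter> arith_prog 1 d"
  have "openin kirch_top V'" unfolding V'_def using openin_Int[OF VW(2) op1] .
  moreover have "1 \<in> V'" unfolding V'_def using VW(3) arith_prog_self by blast
  moreover have "kirch_top closure_of V' \<inter> kirch_top closure_of (arith_prog x d) \<subseteq> B"
  proof
    fix y assume y: "y \<in> kirch_top closure_of V' \<inter> kirch_top closure_of (arith_prog x d)"
    have y1: "y \<ge> 1" using y cl_pos by blast
    have s1: "V' \<subseteq> V" and s2: "V' \<subseteq> arith_prog 1 d" unfolding V'_def by auto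
    have yV: "y \<in> kirch_top closure_of V"
      using y closure_of_mono[OF s1] by blast
    have y1d: "y \<in> kirch_top closure_of (arith_prog 1 d)"
      using y closure_of_mono[OF s2] by blast
    have H1: "\<forall>q. prime q \<longrightarrow> q dvd d \<longrightarrow> q dvd y \<or> [y = 1] (mod q)"
      using cl_ap[of 1 d y] y1d y1 d by simp
    have H2: "\<forall>q. prime q \<longrightarrow> q dvd d \<longrightarrow> q dvd y \<or> [y = x] (mod q)"
      using cl_ap[of x d y] y y1 d cxd assms by simp
    have "\<forall>q. prime q \<longrightarrow> q dvd d \<longrightarrow> q dvd y \<or> [y = x ^ n] (mod q)"
    proof (intro allI impI)
      fix q :: nat assume q: "prime q" "q dvd d"
      show "q dvd y \<or> [y = x ^ n] (mod q)"
      proof (cases "q dvd y")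
        case True thus ?thesis by simp
      next
        case False
        hence a: "[y = 1] (mod q)" and b: "[y = x] (mod q)" using H1 H2 q by auto
        have "[x = 1] (mod q)" using a b by (metis cong_sym cong_trans)
        hence "[x ^ n = 1 ^ n] (mod q)" by (rule cong_pow)
        hence "[x ^ n = 1] (mod q)" by simp
        hence "[y = x ^ n] (mod q)" using a by (metis cong_sym cong_trans)
        thus ?thesis by simp
      qed
    qed
    moreover have "x ^ n \<ge> 1" using assms by simp
    ultimately have "y \<in> kirch_top closure_of (arith_prog (x ^ n) d)"
      using cl_ap[of "x ^ n" d y] y1 d by simp
    hence "y \<in> kirch_top closure_of W" using closure_of_mono[OF d(4)] by blast
    thus "y \<in> B" using yV VW(6) by blast
  qed
  ultimately have "B \<subseteq> {1..} \<and>
    (\<exists>V W. openin kirch_top V \<and> 1 \<in> V \<and> openin kirch_top W \<and> x \<in> W \<and>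
       kirch_top closure_of V \<inter> kirch_top closure_of W \<subseteq> B)"
    using VW(1) opx arith_prog_self[of x d] by blast
  then show "B \<in> kirch_filter {1, x}" using F2_iff[OF x1] by blast
qed


lemma neq_filter:
  fixes x n p :: nat
  assumes "x \<ge> 2" "n \<ge> 1" "prime p" "p dvd x ^ n - 1" "\<not> p dvd x - 1"
  shows "kirch_filter {1, x} \<noteq> kirch_filter {1, x ^ n}"
proof
  assume eqF: "kirch_filter {1, x} = kirch_filter {1, x ^ n}"
  have "x ^ 1 \<le> x ^ n" using assms by (intro power_increasing) auto
  hence xn1: "x ^ n \<noteq> 1" and xn1': "x ^ n \<ge> 1" using assms by simp_all
  have x1: "x \<noteq> 1" using assms by simp
  have p1: "p \<ge> 1" using assms(3) prime_ge_1_nat by blast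
  have sqp: "squarefree p" using assms(3) squarefree_prime by blast
  have pnx: "\<not> p dvd x"
  proof
    assume "p dvd x"
    moreover obtain m where "n = Suc m" using assms(2) by (cases n) auto
    ultimately have "p dvd x ^ n" by simp
    hence "p dvd x ^ n - (x ^ n - 1)" using assms(4) dvd_diff_nat by blast
    hence "p dvd 1" using xn1' by simp
    thus False using assms(3) by simp
  qed
  have cxp: "coprime x p" using prime_imp_coprime[OF assms(3) pnx] by (simp add: coprime_commute)
  have cxn: "[x ^ n = 1] (mod p)" using assms(4) xn1' cong_altdef_nat by blast
  have ncx: "\<not> [x = 1] (mod p)" using assms(5) assms(1) cong_altdef_nat[of 1 x p] by simp
  define B0 where "B0 = kirch_top closure_of (arith_prog 1 p) \<inter> kirch_top closure_of (arith_prog x p)"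
  have B0pos: "B0 \<subseteq> {1..}" unfolding B0_def using cl_pos by blast
  have op1: "openin kirch_top (arith_prog 1 p)" using openin_ap p1 sqp by simp
  have opx: "openin kirch_top (arith_prog x p)" using openin_ap p1 sqp cxp assms(1) by simp
  have "B0 \<subseteq> {1..} \<and>
    (\<exists>V W. openin kirch_top V \<and> 1 \<in> V \<and> openin kirch_top W \<and> x \<in> W \<and>
       kirch_top closure_of V \<inter> kirch_top closure_of W \<subseteq> B0)"
    apply (rule conjI[OF B0pos])
    apply (rule exI[of _ "arith_prog 1 p"], rule exI[of _ "arith_prog x p"])
    using op1 opx arith_prog_self[of 1 p] arith_prog_self[of x p] unfolding B0_def by simp
  hence "B0 \<in> kirch_filter {1, x}" by (rule F2_iff[OF x1, THEN iffD2])
  hence "B0 \<in> kirch_filter {1, x ^ n}" using eqF by simp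
  then obtain V W where VW: "openin kirch_top V" "1 \<in> V" "openin kirch_top W" "x ^ n \<in> W"
     "kirch_top closure_of V \<inter> kirch_top closure_of W \<subseteq> B0"
    using F2_iff[OF xn1, THEN iffD1] by blast
  obtain b where b: "b \<ge> 1" "squarefree b" "arith_prog 1 b \<subseteq> V"
    using nbhd_base[OF VW(1,2)] by blast
  obtain d where d: "d \<ge> 1" "coprime (x ^ n) d" "squarefree d" "arith_prog (x ^ n) d \<subseteq> W"
    using nbhd_base[OF VW(3,4)] by blast
  define r where "r = b * d"
  have r0: "r \<noteq> 0" using b d unfolding r_def by simp
  obtain s where s: "r = p ^ multiplicity p r * s" "\<not> p dvd s"
    apply (rule multiplicity_decompose'[of r p])
    using r0 assms(3) by (auto simp: not_prime_unit)
  have "s \<noteq> 0" using s(1) r0 by (metis mult_0_right)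
  hence s0: "s \<ge> 1" by simp
  define y where "y = s ^ (p - 1)"
  have y1: "y \<ge> 1" unfolding y_def using s0 by simp
  have ycong: "[y = 1] (mod p)" unfolding y_def using fermat_theorem[OF assms(3) s(2)] .
  have pny: "\<not> p dvd y"
  proof
    assume "p dvd y"
    hence "[y = 0] (mod p)" by (simp add: cong_0_iff)
    hence "[1 = 0] (mod p)" using ycong by (metis cong_sym cong_trans)
    hence "p dvd 1" by (simp add: cong_0_iff)
    thus False using assms(3) by simp
  qed
  have qy: "q dvd y" if q: "prime q" "q dvd r" "q \<noteq> p" for q
  proof -
    have "\<not> q dvd p ^ multiplicity p r"
    proof
      assume "q dvd p ^ multiplicity p r"
      hence "q dvd p" using prime_dvd_power q(1) by blast
      hence "q = p" using primes_dvd_imp_eq q(1) assms(3) by blast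
      thus False using q(3) by simp
    qed
    moreover have "q dvd p ^ multiplicity p r * s" using q(2) s(1) by simp
    ultimately have "q dvd s" using prime_dvd_mult_iff[OF q(1)] by blast
    moreover have "p - 1 \<ge> 1" using prime_ge_2_nat[OF assms(3)] by linarith
    hence "0 < p - 1" by simp
    hence "s dvd s ^ (p - 1)" using dvd_power[of "p - 1" s] by blast
    ultimately show ?thesis unfolding y_def using dvd_trans by blast
  qed
  have "y \<in> kirch_top closure_of (arith_prog 1 b)"
  proof -
    have "\<forall>q. prime q \<longrightarrow> q dvd b \<longrightarrow> q dvd y \<or> [y = 1] (mod q)"
    proof (intro allI impI)
      fix q :: nat assume q: "prime q" "q dvd b"
      show "q dvd y \<or> [y = 1] (mod q)"
      proof (cases "q = p")
        case True thus ?thesis using ycong by simp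
      next
        case False
        have "q dvd r" using q(2) unfolding r_def by simp
        thus ?thesis using qy q(1) False by blast
      qed
    qed
    thus ?thesis using cl_ap[of 1 b y] b y1 by simp
  qed
  hence yV: "y \<in> kirch_top closure_of V" using closure_of_mono[OF b(3)] by blast
  have "y \<in> kirch_top closure_of (arith_prog (x ^ n) d)"
  proof -
    have "\<forall>q. prime q \<longrightarrow> q dvd d \<longrightarrow> q dvd y \<or> [y = x ^ n] (mod q)"
    proof (intro allI impI)
      fix q :: nat assume q: "prime q" "q dvd d"
      show "q dvd y \<or> [y = x ^ n] (mod q)"
      proof (cases "q = p")
        case True
        have "[y = x ^ n] (mod p)" using ycong cxn by (metis cong_sym cong_trans)
        thus ?thesis using True by simp
      next
        case False
        have "q dvd r" using q(2) unfolding r_def by simp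
        thus ?thesis using qy q(1) False by blast
      qed
    qed
    thus ?thesis using cl_ap[of "x ^ n" d y] d y1 xn1' by simp
  qed
  hence yW: "y \<in> kirch_top closure_of W" using closure_of_mono[OF d(4)] by blast
  have "y \<in> B0" using yV yW VW(5) by blast
  hence "y \<in> kirch_top closure_of (arith_prog 1 p)" "y \<in> kirch_top closure_of (arith_prog x p)"
    unfolding B0_def by blast+
  hence "p dvd y \<or> [y = 1] (mod p)" "p dvd y \<or> [y = x] (mod p)"
    using cl_ap[of 1 p y] cl_ap[of x p y] p1 y1 cxp assms(1,3) by auto
  hence "[y = 1] (mod p)" "[y = x] (mod p)" using pny by auto
  hence "[x = 1] (mod p)" by (metis cong_sym cong_trans)
  thus False using ncx by simp
qed

lemma pow_sub1_dvd:
  fixes a k :: nat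
  assumes "a \<ge> 1"
  shows "a - 1 dvd a ^ k - 1"
proof -
  have "[a = 1] (mod a - 1)" using assms cong_altdef_nat by simp
  hence "[a ^ k = 1 ^ k] (mod a - 1)" by (rule cong_pow)
  hence "[a ^ k = 1] (mod a - 1)" by simp
  moreover have "a ^ k \<ge> 1" using assms by simp
  ultimately show ?thesis using cong_altdef_nat by blast
qed

lemma prime_even_case:
  fixes x n :: nat
  assumes "x \<ge> 2" "\<forall>m\<ge>1. x \<noteq> 2 ^ m - 1" "even n" "n \<ge> 2"
  shows "\<exists>p. prime p \<and> p dvd x ^ n - 1 \<and> \<not> p dvd x - 1"
proof -
  have xp0: "x + 1 \<noteq> 0" by simp
  obtain s where s: "x + 1 = 2 ^ multiplicity 2 (x + 1) * s" "\<not> 2 dvd s"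
    apply (rule multiplicity_decompose'[of "x + 1" 2])
    by auto
  have "s \<noteq> 1"
  proof
    assume "s = 1"
    hence e: "x + 1 = 2 ^ multiplicity 2 (x + 1)" using s(1) by simp
    have "multiplicity 2 (x + 1) \<ge> 1"
    proof (rule ccontr)
      assume "\<not> multiplicity 2 (x + 1) \<ge> 1"
      hence "multiplicity 2 (x + 1) = 0" by simp
      hence "x + 1 = 1" using e by simp
      thus False using assms(1) by simp
    qed
    moreover have "x = 2 ^ multiplicity 2 (x + 1) - 1" using e by simp
    ultimately show False using assms(2) by blast
  qed
  then obtain p where p: "prime p" "p dvd s" using prime_factor_nat by blast
  have p2: "p \<noteq> 2" using p s(2) by blast
  have px: "p dvd x + 1" using p(2) s(1) by (metis dvd_mult)
  have sq: "x ^ 2 - 1 = (x + 1) * (x - 1)"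
    using assms(1) by (simp add: power2_eq_square algebra_simps diff_mult_distrib2)
  obtain k where k: "n = 2 * k" using assms(3) by blast
  have "x ^ 2 - 1 dvd (x ^ 2) ^ k - 1" using pow_sub1_dvd[of "x ^ 2" k] assms(1) by simp
  hence "x ^ 2 - 1 dvd x ^ n - 1" using k by (simp add: power_mult)
  moreover have "p dvd (x + 1) * (x - 1)" using px by (rule dvd_mult2)
  hence "p dvd x ^ 2 - 1" by (simp only: sq)
  ultimately have "p dvd x ^ n - 1" using dvd_trans by blast
  moreover have "\<not> p dvd x - 1"
  proof
    assume "p dvd x - 1"
    hence "p dvd (x + 1) - (x - 1)" using px dvd_diff_nat by blast
    moreover have "(x + 1) - (x - 1) = 2" using assms(1) by simp
    ultimately have "p dvd 2" by simp
    hence "p = 2" using primes_dvd_imp_eq p(1) two_is_prime_nat by blast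
    thus False using p2 by simp
  qed
  ultimately show ?thesis using p(1) by blast
qed


lemma geom_nat:
  fixes x q :: nat
  assumes "x \<ge> 1"
  shows "(x - 1) * (\<Sum>i<q. x ^ i) = x ^ q - 1"
proof -
  have "int ((x - 1) * (\<Sum>i<q. x ^ i)) = (int x - 1) * (\<Sum>i<q. int x ^ i)"
    using assms by (simp add: of_nat_diff)
  also have "\<dots> = int x ^ q - 1" using power_diff_1_eq[of "int x" q] by simp
  also have "\<dots> = int (x ^ q - 1)" using assms by (simp add: of_nat_diff)
  finally show ?thesis by (simp only: of_nat_eq_iff)
qed

lemma cong_S_mod_p:
  fixes x q p :: nat
  assumes "x \<ge> 1" "p dvd x - 1"
  shows "[(\<Sum>i<q. x ^ i) = q] (mod p)"
proof -
  have "[x = 1] (mod p)" using assms cong_altdef_nat by blast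
  hence "\<forall>i\<in>{..<q}. [x ^ i = 1 ^ i] (mod p)" using cong_pow by blast
  hence "[(\<Sum>i<q. x ^ i) = (\<Sum>i<q. 1 ^ i)] (mod p)" by (intro cong_sum) blast
  thus ?thesis by simp
qed

lemma pow_cong_t:
  fixes t i :: nat
  shows "[(t + 1) ^ i = 1 + i * t] (mod t ^ 2)"
proof (induction i)
  case 0
  then show ?case by simp
next
  case (Suc i)
  have "[(t + 1) ^ Suc i = (t + 1) * (1 + i * t)] (mod t ^ 2)"
    using cong_mult[OF cong_refl[of "t + 1"] Suc.IH] by simp
  moreover have "(t + 1) * (1 + i * t) = (1 + Suc i * t) + i * t ^ 2"
    by (simp add: algebra_simps power2_eq_square)
  moreover have "[(1 + Suc i * t) + i * t ^ 2 = 1 + Suc i * t] (mod t ^ 2)"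
    by (simp add: cong_def)
  ultimately show ?case by (metis cong_trans)
qed

lemma sum_i_nat: "2 * (\<Sum>i<q. i) = q * (q - 1)"
  for q :: nat
proof (induction q)
  case 0
  then show ?case by simp
next
  case (Suc q)
  have "2 * (\<Sum>i<Suc q. i) = 2 * (\<Sum>i<q. i) + 2 * q" by simp
  also have "\<dots> = q * (q - 1) + 2 * q" using Suc.IH by simp
  also have "\<dots> = Suc q * (Suc q - 1)" by (cases q) (auto simp: algebra_simps)
  finally show ?case .
qed

lemma not_sq_dvd:
  fixes x q :: nat
  assumes "prime q" "q \<noteq> 2" "q dvd x - 1" "x \<ge> 1"
  shows "\<not> q ^ 2 dvd (\<Sum>i<q. x ^ i)"
proof
  assume A: "q ^ 2 dvd (\<Sum>i<q. x ^ i)"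
  define t where "t = x - 1"
  have xt: "x = t + 1" unfolding t_def using assms(4) by simp
  define G where "G = (\<Sum>i<q. i)"
  have "\<forall>i\<in>{..<q}. [x ^ i = 1 + i * t] (mod t ^ 2)" using pow_cong_t xt by blast
  hence c1: "[(\<Sum>i<q. x ^ i) = (\<Sum>i<q. 1 + i * t)] (mod t ^ 2)" by (intro cong_sum) blast
  have "(\<Sum>i<q. 1 + i * t) = (\<Sum>i<q. (1::nat)) + (\<Sum>i<q. i * t)" by (rule sum.distrib)
  also have "\<dots> = q + G * t" unfolding G_def by (simp add: sum_distrib_right)
  finally have "(\<Sum>i<q. 1 + i * t) = q + G * t" .
  with c1 have c2: "[(\<Sum>i<q. x ^ i) = q + G * t] (mod t ^ 2)" by simp
  have qt: "q dvd t" using assms(3) t_def by simp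
  hence "q ^ 2 dvd t ^ 2" by (rule dvd_power_same)
  hence c3: "[(\<Sum>i<q. x ^ i) = q + G * t] (mod q ^ 2)" using c2 cong_dvd_modulus_nat by blast
  have "q dvd 2 * G" unfolding G_def using sum_i_nat[of q] by simp
  moreover have "\<not> q dvd 2"
  proof
    assume "q dvd 2"
    hence "q = 2" using primes_dvd_imp_eq assms(1) two_is_prime_nat by blast
    thus False using assms(2) by simp
  qed
  ultimately have qG: "q dvd G" using prime_dvd_mult_iff[OF assms(1)] by blast
  have "q * q dvd G * t" using qG qt by (rule mult_dvd_mono)
  hence "q ^ 2 dvd G * t" by (simp add: power2_eq_square)
  then obtain c where "G * t = q ^ 2 * c" by blast
  hence "[q + G * t = q] (mod q ^ 2)" by (simp add: cong_def)
  hence "[(\<Sum>i<q. x ^ i) = q] (mod q ^ 2)" using c3 cong_trans by blast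
  moreover have "[(\<Sum>i<q. x ^ i) = 0] (mod q ^ 2)" using A by (simp add: cong_0_iff)
  ultimately have "[q = 0] (mod q ^ 2)" by (metis cong_sym cong_trans)
  hence "q * q dvd q" by (simp add: cong_0_iff power2_eq_square)
  moreover have "q > 1" using assms(1) prime_gt_1_nat by blast
  ultimately show False
    by (metis dvd_mult_cancel2 mult.right_neutral nat_dvd_1_iff_1 not_less_iff_gr_or_eq zero_less_one
        less_trans mult_cancel_left1 order_less_irrefl)
qed

lemma prime_odd_case:
  fixes x n :: nat
  assumes "x \<ge> 2" "odd n" "n \<ge> 2"
  shows "\<exists>p. prime p \<and> p dvd x ^ n - 1 \<and> \<not> p dvd x - 1"
proof -
  obtain q where q: "prime q" "q dvd n" using prime_factor_nat[of n] assms(3) by auto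
  have q2: "q \<noteq> 2" using q(2) assms(2) by blast
  have q1: "q \<ge> 2" using q(1) prime_ge_2_nat by blast
  define S where "S = (\<Sum>i<q. x ^ i)"
  have x1: "x \<ge> 1" using assms(1) by simp
  have "S dvd x ^ q - 1" using geom_nat[OF x1, of q] unfolding S_def by (metis dvd_triv_right)
  moreover obtain k where k: "n = q * k" using q(2) by blast
  have "x ^ q - 1 dvd (x ^ q) ^ k - 1" using pow_sub1_dvd[of "x ^ q" k] x1 by simp
  hence "x ^ q - 1 dvd x ^ n - 1" using k by (simp add: power_mult)
  ultimately have Sdvd: "S dvd x ^ n - 1" using dvd_trans by blast
  have Sgt: "q < S"
  proof -
    have "(\<Sum>i<q. (1::nat)) < (\<Sum>i<q. x ^ i)"
    proof (rule sum_strict_mono_ex1)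
      show "finite {..<q}" by simp
      show "\<forall>i\<in>{..<q}. 1 \<le> x ^ i" using x1 by simp
      show "\<exists>a\<in>{..<q}. 1 < x ^ a" using q1 assms(1) by (intro bexI[of _ 1]) auto
    qed
    thus ?thesis unfolding S_def by simp
  qed
  show ?thesis
  proof (rule ccontr)
    assume "\<not> ?thesis"
    hence H: "\<And>p. prime p \<Longrightarrow> p dvd S \<Longrightarrow> p dvd x - 1"
      using Sdvd dvd_trans by blast
    have onlyq: "p = q" if "prime p" "p dvd S" for p
    proof -
      have "p dvd x - 1" using H that by blast
      hence "[S = q] (mod p)" unfolding S_def using cong_S_mod_p x1 by blast
      moreover have "[S = 0] (mod p)" using that(2) by (simp add: cong_0_iff)
      ultimately have "[q = 0] (mod p)" by (metis cong_sym cong_trans)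
      hence "p dvd q" by (simp add: cong_0_iff)
      thus ?thesis using primes_dvd_imp_eq that(1) q(1) by blast
    qed
    have "S \<noteq> 1" using Sgt q1 by simp
    then obtain p0 where p0: "prime p0" "p0 dvd S" using prime_factor_nat by blast
    hence qS: "q dvd S" using onlyq by blast
    then obtain S' where S': "S = q * S'" by blast
    have "S' \<noteq> 1" using S' Sgt by simp
    then obtain r where r: "prime r" "r dvd S'" using prime_factor_nat by blast
    hence "r dvd S" using S' by simp
    hence "r = q" using onlyq r(1) by blast
    hence "q * q dvd S" using S' r(2) by simp
    hence "q ^ 2 dvd S" by (simp add: power2_eq_square)
    moreover have "q dvd x - 1" using H q(1) qS by blast
    ultimately show False using not_sq_dvd[OF q(1) q2 _ x1] unfolding S_def by blast
  qed
qed


theorem lemma3p20: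
  fixes x :: nat
  assumes "x \<ge> 2"
  shows "(kirch_filter {1, x} \<in> {kirch_filter {1, x ^ n} | n. n \<ge> 1}
          \<and> (\<forall>n\<ge>1. kirch_filter {1, x ^ n} \<subseteq> kirch_filter {1, x}))
       \<and> ((\<forall>m\<ge>1. x \<noteq> 2 * m \<and> x \<noteq> 2 ^ m - 1) \<longrightarrow>
           {n. n \<ge> 1 \<and> kirch_filter {1, x ^ n} = kirch_filter {1, x}} = {1})"
proof (intro conjI impI allI)
  have "kirch_filter {1, x} = kirch_filter {1, x ^ 1} \<and> (1::nat) \<ge> 1" by simp
  thus "kirch_filter {1, x} \<in> {kirch_filter {1, x ^ n} | n. n \<ge> 1}" by blast
next
  fix n :: nat assume "n \<ge> 1"
  thus "kirch_filter {1, x ^ n} \<subseteq> kirch_filter {1, x}" using sub_filter assms by blast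
next
  assume H: "\<forall>m\<ge>1. x \<noteq> 2 * m \<and> x \<noteq> 2 ^ m - 1"
  have H2: "\<forall>m\<ge>1. x \<noteq> 2 ^ m - 1" using H by blast
  have A: "n = 1" if n1: "n \<ge> 1" and eqF: "kirch_filter {1, x ^ n} = kirch_filter {1, x}" for n :: nat
  proof (rule ccontr)
    assume "n \<noteq> 1"
    hence n2: "n \<ge> 2" using n1 by simp
    have "\<exists>p. prime p \<and> p dvd x ^ n - 1 \<and> \<not> p dvd x - 1"
    proof (cases "even n")
      case True show ?thesis by (rule prime_even_case[OF assms H2 True n2])
    next
      case False show ?thesis by (rule prime_odd_case[OF assms False n2])
    qed
    then obtain p where p: "prime p" "p dvd x ^ n - 1" "\<not> p dvd x - 1" by blast
    have "kirch_filter {1, x} \<noteq> kirch_filter {1, x ^ n}"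
      using neq_filter[OF assms n1 p] .
    thus False using eqF by simp
  qed
  show "{n. n \<ge> 1 \<and> kirch_filter {1, x ^ n} = kirch_filter {1, x}} = {1}"
    using A by auto
qed

end
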